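(* Let $G$ be a connected cubic graph on $n$ vertices with $n\equiv 0\pmod 4$. If $G$ has a Xuong tree whose cotree has a unique odd component and this component has at least three edges, then $G$ admits a coherent stable decycling partition, i.e. a partition $\{A,J\}$ of $V(G)$ such that $G[A]$ is a tree and $J$ is independent or near-independent.
   Context: Graphs are finite; loops and multiple edges allowed; a cubic graph is $3$-regular. For connected $G$, $\beta(G)=|E(G)|-|V(G)|+1$; $\gamma_M(G)$ is the largest genus of a closed orientable surface on which $G$ has a cellular embedding; $\xi(G)=\beta(G)-2\gamma_M(G)$. For a spanning tree $T$ the cotree is $G-E(T)$; a component is odd if it has an odd number of edges; $T$ is a Xuong tree if its cotree has exactly $\xi(G)$ odd components. $J$ is independent if $G[J]$ has no edges and near-independent if $G[J]$ has exactly one edge. *)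

theory Defs
  imports Main "HOL-Combinatorics.Permutations"
begin

text \<open>A finite multigraph (loops and parallel edges allowed) is given by a vertex set V,
an edge set E and two endpoint maps src, tgt (an arbitrary reference orientation;
a loop is an edge e with src e = tgt e).\<close>

definition multigraph :: "'v set \<Rightarrow> 'e set \<Rightarrow> ('e \<Rightarrow> 'v) \<Rightarrow> ('e \<Rightarrow> 'v) \<Rightarrow> bool" where
  "multigraph V E src tgt \<longleftrightarrow> finite V \<and> finite E \<and> (\<forall>e\<in>E. src e \<in> V \<and> tgt e \<in> V)"

text \<open>Degree: a loop contributes 2.\<close>
definition degree :: "'e set \<Rightarrow> ('e \<Rightarrow> 'v) \<Rightarrow> ('e \<Rightarrow> 'v) \<Rightarrow> 'v \<Rightarrow> nat" where
  "degree E src tgt v = card {e\<in>E. src e = v} + card {e\<in>E. tgt e = v}"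

definition cubic :: "'v set \<Rightarrow> 'e set \<Rightarrow> ('e \<Rightarrow> 'v) \<Rightarrow> ('e \<Rightarrow> 'v) \<Rightarrow> bool" where
  "cubic V E src tgt \<longleftrightarrow> (\<forall>v\<in>V. degree E src tgt v = 3)"

definition reach :: "'e set \<Rightarrow> ('e \<Rightarrow> 'v) \<Rightarrow> ('e \<Rightarrow> 'v) \<Rightarrow> ('v \<times> 'v) set" where
  "reach F src tgt = ({(src e, tgt e) | e. e \<in> F} \<union> {(tgt e, src e) | e. e \<in> F})\<^sup>*"

definition connected_graph :: "'v set \<Rightarrow> 'e set \<Rightarrow> ('e \<Rightarrow> 'v) \<Rightarrow> ('e \<Rightarrow> 'v) \<Rightarrow> bool" where
  "connected_graph V F src tgt \<longleftrightarrow> V \<noteq> {} \<and> (\<forall>u\<in>V. \<forall>v\<in>V. (u, v) \<in> reach F src tgt)"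

text \<open>The graph (V, F) is acyclic: every edge is a bridge (a loop is never a bridge).\<close>
definition acyclic_graph :: "'e set \<Rightarrow> ('e \<Rightarrow> 'v) \<Rightarrow> ('e \<Rightarrow> 'v) \<Rightarrow> bool" where
  "acyclic_graph F src tgt \<longleftrightarrow> (\<forall>e\<in>F. (src e, tgt e) \<notin> reach (F - {e}) src tgt)"

definition is_tree :: "'v set \<Rightarrow> 'e set \<Rightarrow> ('e \<Rightarrow> 'v) \<Rightarrow> ('e \<Rightarrow> 'v) \<Rightarrow> bool" where
  "is_tree V F src tgt \<longleftrightarrow> connected_graph V F src tgt \<and> acyclic_graph F src tgt"

definition spanning_tree :: "'v set \<Rightarrow> 'e set \<Rightarrow> ('e \<Rightarrow> 'v) \<Rightarrow> ('e \<Rightarrow> 'v) \<Rightarrow> 'e set \<Rightarrow> bool" where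
  "spanning_tree V E src tgt T \<longleftrightarrow> T \<subseteq> E \<and> is_tree V T src tgt"

definition induced_edges :: "'e set \<Rightarrow> ('e \<Rightarrow> 'v) \<Rightarrow> ('e \<Rightarrow> 'v) \<Rightarrow> 'v set \<Rightarrow> 'e set" where
  "induced_edges E src tgt A = {e\<in>E. src e \<in> A \<and> tgt e \<in> A}"

definition components :: "'v set \<Rightarrow> 'e set \<Rightarrow> ('e \<Rightarrow> 'v) \<Rightarrow> ('e \<Rightarrow> 'v) \<Rightarrow> 'v set set" where
  "components V F src tgt = {{v\<in>V. (u, v) \<in> reach F src tgt} | u. u \<in> V}"

definition odd_cotree_components ::
  "'v set \<Rightarrow> 'e set \<Rightarrow> ('e \<Rightarrow> 'v) \<Rightarrow> ('e \<Rightarrow> 'v) \<Rightarrow> 'e set \<Rightarrow> 'v set set" where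
  "odd_cotree_components V E src tgt T =
     {K \<in> components V (E - T) src tgt. odd (card (induced_edges (E - T) src tgt K))}"

text \<open>Darts: (e, True) is the end of e at src e, (e, False) the end at tgt e.\<close>
definition darts :: "'e set \<Rightarrow> ('e \<times> bool) set" where
  "darts E = E \<times> UNIV"

definition dart_vertex :: "('e \<Rightarrow> 'v) \<Rightarrow> ('e \<Rightarrow> 'v) \<Rightarrow> 'e \<times> bool \<Rightarrow> 'v" where
  "dart_vertex src tgt d = (if snd d then src (fst d) else tgt (fst d))"

definition dart_flip :: "'e \<times> bool \<Rightarrow> 'e \<times> bool" where
  "dart_flip d = (fst d, \<not> snd d)"

definition rotation_system ::
  "'e set \<Rightarrow> ('e \<Rightarrow> 'v) \<Rightarrow> ('e \<Rightarrow> 'v) \<Rightarrow> ('e \<times> bool \<Rightarrow> 'e \<times> bool) \<Rightarrow> bool" where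
  "rotation_system E src tgt \<rho> \<longleftrightarrow>
     \<rho> permutes darts E \<and>
     (\<forall>d\<in>darts E. dart_vertex src tgt (\<rho> d) = dart_vertex src tgt d) \<and>
     (\<forall>d\<in>darts E. \<forall>d'\<in>darts E. dart_vertex src tgt d = dart_vertex src tgt d' \<longrightarrow>
        (\<exists>k. (\<rho> ^^ k) d = d'))"

definition num_faces :: "'e set \<Rightarrow> ('e \<times> bool \<Rightarrow> 'e \<times> bool) \<Rightarrow> nat" where
  "num_faces E \<rho> = card {{d'. \<exists>k. ((\<rho> \<circ> dart_flip) ^^ k) d = d'} | d. d \<in> darts E}"

text \<open>Genus of the cellular embedding given by a rotation system (Euler's formula).\<close>
definition embedding_genus :: "'v set \<Rightarrow> 'e set \<Rightarrow> ('e \<times> bool \<Rightarrow> 'e \<times> bool) \<Rightarrow> int" where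
  "embedding_genus V E \<rho> = (2 - int (card V) + int (card E) - int (num_faces E \<rho>)) div 2"

definition max_genus :: "'v set \<Rightarrow> 'e set \<Rightarrow> ('e \<Rightarrow> 'v) \<Rightarrow> ('e \<Rightarrow> 'v) \<Rightarrow> int" where
  "max_genus V E src tgt = Max {embedding_genus V E \<rho> | \<rho>. rotation_system E src tgt \<rho>}"

definition betti :: "'v set \<Rightarrow> 'e set \<Rightarrow> int" where
  "betti V E = int (card E) - int (card V) + 1"

definition xi :: "'v set \<Rightarrow> 'e set \<Rightarrow> ('e \<Rightarrow> 'v) \<Rightarrow> ('e \<Rightarrow> 'v) \<Rightarrow> int" where
  "xi V E src tgt = betti V E - 2 * max_genus V E src tgt"

definition xuong_tree :: "'v set \<Rightarrow> 'e set \<Rightarrow> ('e \<Rightarrow> 'v) \<Rightarrow> ('e \<Rightarrow> 'v) \<Rightarrow> 'e set \<Rightarrow> bool" where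
  "xuong_tree V E src tgt T \<longleftrightarrow> spanning_tree V E src tgt T \<and>
     int (card (odd_cotree_components V E src tgt T)) = xi V E src tgt"

definition independent_set :: "'e set \<Rightarrow> ('e \<Rightarrow> 'v) \<Rightarrow> ('e \<Rightarrow> 'v) \<Rightarrow> 'v set \<Rightarrow> bool" where
  "independent_set E src tgt J \<longleftrightarrow> induced_edges E src tgt J = {}"

definition near_independent_set :: "'e set \<Rightarrow> ('e \<Rightarrow> 'v) \<Rightarrow> ('e \<Rightarrow> 'v) \<Rightarrow> 'v set \<Rightarrow> bool" where
  "near_independent_set E src tgt J \<longleftrightarrow> card (induced_edges E src tgt J) = 1"

definition coherent_stable_decycling_partition ::
  "'v set \<Rightarrow> 'e set \<Rightarrow> ('e \<Rightarrow> 'v) \<Rightarrow> ('e \<Rightarrow> 'v) \<Rightarrow> 'v set \<Rightarrow> 'v set \<Rightarrow> bool" where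
  "coherent_stable_decycling_partition V E src tgt A J \<longleftrightarrow>
     A \<union> J = V \<and> A \<inter> J = {} \<and> A \<noteq> {} \<and> J \<noteq> {} \<and>
     is_tree A (induced_edges E src tgt A) src tgt \<and>
     (independent_set E src tgt J \<or> near_independent_set E src tgt J)"

end

theory Submission
  imports Defs
begin

context fixes src tgt :: "'e \<Rightarrow> 'v" begin

definition inc :: "'e set \<Rightarrow> 'v \<Rightarrow> 'e set" where
  "inc F x = {e\<in>F. src e = x \<or> tgt e = x}"

definition RR :: "'e set \<Rightarrow> ('v \<times> 'v) set" where
  "RR F = {(src e, tgt e) | e. e \<in> F} \<union> {(tgt e, src e) | e. e \<in> F}"

lemma reach_R: "reach F src tgt = (RR F)\<^sup>*"
  by (simp add: reach_def RR_def)

lemma R_iff: "(x,y) \<in> RR F \<longleftrightarrow> (\<exists>e\<in>F. (src e = x \<and> tgt e = y) \<or> (tgt e = x \<and> src e = y))"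
  unfolding RR_def by blast

lemma sym_R: "sym (RR F)" unfolding RR_def sym_def by blast

lemma rsym: "(x,y) \<in> (RR F)\<^sup>* \<Longrightarrow> (y,x) \<in> (RR F)\<^sup>*"
  using sym_rtrancl[OF sym_R] by (metis symD)

lemma R_mono: "F \<subseteq> F' \<Longrightarrow> (RR F)\<^sup>* \<subseteq> (RR F')\<^sup>*"
  unfolding RR_def by (rule rtrancl_mono) blast

definition wfg :: "'v set \<Rightarrow> 'e set \<Rightarrow> bool" where
  "wfg K F \<longleftrightarrow> finite K \<and> finite F \<and> (\<forall>e\<in>F. src e \<in> K \<and> tgt e \<in> K \<and> src e \<noteq> tgt e)"

definition conn :: "'v set \<Rightarrow> 'e set \<Rightarrow> bool" where
  "conn K F \<longleftrightarrow> K \<noteq> {} \<and> (\<forall>u\<in>K. \<forall>v\<in>K. (u, v) \<in> (RR F)\<^sup>*)"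

lemma conn_iff: "connected_graph K F src tgt = conn K F"
  by (simp add: connected_graph_def conn_def reach_R)

lemma nonisolated:
  assumes "wfg K F" "conn K F" "F \<noteq> {}" "x \<in> K" shows "inc F x \<noteq> {}"
proof -
  obtain g where g: "g \<in> F" using assms(3) by blast
  then have "src g \<in> K" "tgt g \<in> K" "src g \<noteq> tgt g" using assms(1) wfg_def by auto
  then obtain y where y: "y \<in> K" "y \<noteq> x" by metis
  then have "(x,y) \<in> (RR F)\<^sup>*" using assms(2,4) unfolding conn_def by blast
  then obtain z where "(x,z) \<in> RR F" using y(2) by (metis converse_rtranclE)
  then show ?thesis unfolding R_iff inc_def by auto
qed

lemma leaves_reach:
  assumes wf: "\<forall>e\<in>F. src e \<in> K \<and> tgt e \<in> K \<and> src e \<noteq> tgt e"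
    and L: "\<forall>x\<in>L. \<exists>g. inc F x = {g}"
    and u: "u \<notin> L"
    and r: "(u,x) \<in> (RR F)\<^sup>*"
  shows "(x \<notin> L \<longrightarrow> (u,x) \<in> (RR (induced_edges F src tgt (K - L)))\<^sup>*) \<and>
         (x \<in> L \<longrightarrow> (\<exists>y. y \<notin> L \<and> (u,y) \<in> (RR (induced_edges F src tgt (K - L)))\<^sup>* \<and>
             (\<forall>g\<in>inc F x. (src g = x \<and> tgt g = y) \<or> (tgt g = x \<and> src g = y))))"
  using r
proof (induction rule: rtrancl_induct)
  case base then show ?case using u by auto
next
  case (step v x)
  obtain g where g: "g \<in> F" "(src g = v \<and> tgt g = x) \<or> (tgt g = v \<and> src g = x)"
    using step.hyps(2) R_iff by blast
  show ?case
  proof (cases "v \<in> L")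
    case True
    then obtain y where y: "y \<notin> L" "(u,y) \<in> (RR (induced_edges F src tgt (K - L)))\<^sup>*"
      "\<forall>g\<in>inc F v. (src g = v \<and> tgt g = y) \<or> (tgt g = v \<and> src g = y)" using step.IH by blast
    have "g \<in> inc F v" using g unfolding inc_def by auto
    then have "x = y" using y(3) g wf by force
    then show ?thesis using y by auto
  next
    case False
    then have uv: "(u,v) \<in> (RR (induced_edges F src tgt (K - L)))\<^sup>*" using step.IH by blast
    show ?thesis
    proof (cases "x \<in> L")
      case True
      obtain g' where "inc F x = {g'}" using L True by blast
      moreover have "g \<in> inc F x" using g inc_def by auto
      ultimately have "inc F x = {g}" by auto
      then show ?thesis using True False uv g by auto
    next
      case xL: False
      have "g \<in> induced_edges F src tgt (K - L)" using g wf False xL unfolding induced_edges_def by auto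
      then have "(v,x) \<in> RR (induced_edges F src tgt (K - L))" using g unfolding R_iff by blast
      then show ?thesis using uv xL by (meson rtrancl.rtrancl_into_rtrancl)
    qed
  qed
qed

lemma leaf_conn:
  assumes "wfg K F" "conn K F" "v \<in> K" "inc F v = {e}" "K \<noteq> {v}"
  shows "conn (K - {v}) (F - {e})" and "wfg (K - {v}) (F - {e})"
proof -
  have ind: "induced_edges F src tgt (K - {v}) = F - {e}"
    using assms(1,4) unfolding induced_edges_def wfg_def inc_def by blast
  have wf: "\<forall>e\<in>F. src e \<in> K \<and> tgt e \<in> K \<and> src e \<noteq> tgt e" using assms(1) wfg_def by auto
  show "conn (K - {v}) (F - {e})"
    unfolding conn_def
  proof (intro conjI ballI)
    show "K - {v} \<noteq> {}" using assms(3,5) by blast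
  next
    fix a b assume ab: "a \<in> K - {v}" "b \<in> K - {v}"
    have "(a,b) \<in> (RR F)\<^sup>*" using assms(2) ab unfolding conn_def by blast
    from leaves_reach[OF wf _ _ this, of "{v}"] show "(a,b) \<in> (RR (F - {e}))\<^sup>*"
      using ab assms(4) ind by auto
  qed
  show "wfg (K - {v}) (F - {e})" using assms(1,4) unfolding wfg_def inc_def by blast
qed

lemma deg_inc:
  assumes "finite F" "\<forall>e\<in>F. src e \<noteq> tgt e"
  shows "degree F src tgt x = card (inc F x)"
proof -
  have "inc F x = {e\<in>F. src e = x} \<union> {e\<in>F. tgt e = x}" unfolding inc_def by blast
  moreover have "{e\<in>F. src e = x} \<inter> {e\<in>F. tgt e = x} = {}" using assms(2) by auto
  ultimately show ?thesis unfolding degree_def using assms(1) by (simp add: card_Un_disjoint)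
qed

lemma fiber_sum:
  assumes "finite F" "finite S"
  shows "(\<Sum>x\<in>S. card {g\<in>F. f g = x}) = card {g\<in>F. f g \<in> S}"
proof -
  have "{g\<in>F. f g \<in> S} = (\<Union>x\<in>S. {g\<in>F. f g = x})" by blast
  moreover have "card (\<Union>x\<in>S. {g\<in>F. f g = x}) = (\<Sum>x\<in>S. card {g\<in>F. f g = x})"
    by (rule card_UN_disjoint) (use assms in auto)
  ultimately show ?thesis by simp
qed

lemma cycle_conn:
  assumes wf: "wfg K F" and c: "conn K F" and eF: "e \<in> F" and d2: "\<forall>x\<in>K. card (inc F x) = 2"
  shows "conn K (F - {e})"
proof -
  define u where "u = src e"
  define w where "w = tgt e"
  define F' where "F' = F - {e}"
  have fin: "finite F" "finite K" using wf wfg_def by auto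
  have uw: "u \<in> K" "w \<in> K" "u \<noteq> w" using wf eF unfolding wfg_def u_def w_def by auto
  show ?thesis
  proof (cases "(u,w) \<in> (RR F')\<^sup>*")
    case True
    have "RR F \<subseteq> (RR F')\<^sup>*"
    proof
      fix p assume "p \<in> RR F"
      then obtain g where g: "g \<in> F" "p = (src g, tgt g) \<or> p = (tgt g, src g)" unfolding RR_def by blast
      show "p \<in> (RR F')\<^sup>*"
      proof (cases "g = e")
        case True
        then show ?thesis using g \<open>(u,w) \<in> (RR F')\<^sup>*\<close> rsym u_def w_def by auto
      next
        case False
        then have "p \<in> RR F'" using g unfolding RR_def F'_def by blast
        then show ?thesis by auto
      qed
    qed
    then have "(RR F)\<^sup>* \<subseteq> (RR F')\<^sup>*" by (rule rtrancl_subset_rtrancl)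
    then show ?thesis using c unfolding conn_def F'_def by blast
  next
    case False
    define S where "S = {x\<in>K. (u,x) \<in> (RR F')\<^sup>*}"
    have finS: "finite S" using fin S_def by auto
    have uS: "u \<in> S" using uw S_def by auto
    have wS: "w \<notin> S" using False S_def by auto
    have finF': "finite F'" using fin F'_def by auto
    have lf: "\<forall>g\<in>F'. src g \<noteq> tgt g" using wf unfolding wfg_def F'_def by auto
    have clos: "{g\<in>F'. src g \<in> S} = {g\<in>F'. tgt g \<in> S}"
    proof -
      have "src g \<in> S \<longleftrightarrow> tgt g \<in> S" if "g \<in> F'" for g
      proof -
        have "(src g, tgt g) \<in> RR F'" "(tgt g, src g) \<in> RR F'" using that unfolding RR_def by blast+
        moreover have "src g \<in> K" "tgt g \<in> K" using that wf unfolding wfg_def F'_def by auto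
        ultimately show ?thesis unfolding S_def
          using rtrancl.rtrancl_into_rtrancl[of u "src g" "RR F'" "tgt g"]
            rtrancl.rtrancl_into_rtrancl[of u "tgt g" "RR F'" "src g"] by blast
      qed
      then show ?thesis by blast
    qed
    have "(\<Sum>x\<in>S. degree F' src tgt x) = (\<Sum>x\<in>S. card {g\<in>F'. src g = x}) + (\<Sum>x\<in>S. card {g\<in>F'. tgt g = x})"
      unfolding degree_def by (simp add: sum.distrib)
    also have "\<dots> = card {g\<in>F'. src g \<in> S} + card {g\<in>F'. tgt g \<in> S}"
      using fiber_sum[OF finF' finS] by simp
    finally have ev: "(\<Sum>x\<in>S. degree F' src tgt x) = 2 * card {g\<in>F'. src g \<in> S}" using clos by simp
    have dx: "degree F' src tgt x = (if x = u then 1 else 2)" if "x \<in> S" for x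
    proof -
      have xK: "x \<in> K" using that S_def by auto
      have "degree F' src tgt x = card (inc F' x)" using deg_inc[OF finF' lf] by simp
      also have "inc F' x = inc F x - (if x = u then {e} else {})"
        using that wS unfolding inc_def F'_def u_def w_def by auto
      also have "card \<dots> = (if x = u then 1 else 2)"
      proof (cases "x = u")
        case True
        then have "e \<in> inc F x" using eF by (simp add: inc_def u_def)
        moreover have "finite (inc F x)" using fin by (simp add: inc_def)
        ultimately show ?thesis using True d2 xK by (simp add: card_Diff_singleton)
      next
        case False
        then show ?thesis using d2 xK by simp
      qed
      finally show ?thesis .
    qed
    have "(\<Sum>x\<in>S. degree F' src tgt x) = degree F' src tgt u + (\<Sum>x\<in>S-{u}. degree F' src tgt x)"
      using finS uS by (simp add: sum.remove)
    also have "\<dots> = 1 + 2 * card (S - {u})"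
    proof -
      have "(\<Sum>x\<in>S-{u}. degree F' src tgt x) = (\<Sum>x\<in>S-{u}. (2::nat))"
        using dx by (intro sum.cong) auto
      then show ?thesis using dx[OF uS] by simp
    qed
    finally show ?thesis using ev by presburger
  qed
qed

definition ge :: "'e set \<Rightarrow> 'v set \<Rightarrow> bool" where
  "ge F J \<longleftrightarrow> (\<forall>x\<in>J. card (inc F x) = 2) \<and> (\<forall>e\<in>F. (src e \<in> J) \<noteq> (tgt e \<in> J))"

definition go :: "'e set \<Rightarrow> 'v set \<Rightarrow> bool" where
  "go F J \<longleftrightarrow> (\<forall>x\<in>J. card (inc F x) = 2) \<and>
     (\<exists>e0\<in>F. src e0 \<in> J \<and> tgt e0 \<in> J \<and> (\<forall>e\<in>F-{e0}. (src e \<in> J) \<noteq> (tgt e \<in> J)))"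

lemma extend:
  assumes J2: "\<forall>x\<in>J2. card (inc F2 x) = 2"
    and F: "F = F2 \<union> {e, e'}" "finite F" "\<forall>x. card (inc F x) \<le> 2"
    and u2: "\<forall>g\<in>F2. src g \<noteq> u \<and> tgt g \<noteq> u"
    and uJ: "u \<notin> J2" and cu: "card (inc F u) = 2"
    and ee: "\<forall>g\<in>{e,e'}. ((src g = u \<and> tgt g \<notin> J2 \<and> tgt g \<noteq> u) \<or> (tgt g = u \<and> src g \<notin> J2 \<and> src g \<noteq> u))"
  shows "(ge F2 J2 \<longrightarrow> ge F (insert u J2)) \<and> (go F2 J2 \<longrightarrow> go F (insert u J2))"
proof -
  have deg: "\<forall>x\<in>insert u J2. card (inc F x) = 2"
  proof
    fix x assume "x \<in> insert u J2"
    then show "card (inc F x) = 2"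
    proof
      assume "x = u" with cu show ?thesis by simp
    next
      assume xJ: "x \<in> J2"
      have "inc F2 x \<subseteq> inc F x" using F(1) unfolding inc_def by auto
      then have "card (inc F2 x) \<le> card (inc F x)" using F(2) by (intro card_mono) (auto simp: inc_def)
      then show ?thesis using J2 xJ F(3) by (metis le_antisym)
    qed
  qed
  have edge2: "(src g \<in> insert u J2) = (src g \<in> J2) \<and> (tgt g \<in> insert u J2) = (tgt g \<in> J2)"
    if "g \<in> F2" for g using u2 that by auto
  have edge1: "(src g \<in> insert u J2) \<noteq> (tgt g \<in> insert u J2)" if "g \<in> {e,e'}" for g
    using ee that by auto
  have A: "ge F (insert u J2)" if "ge F2 J2"
    unfolding ge_def
  proof (intro conjI ballI)
    fix g assume "g \<in> F"
    then have "g \<in> F2 \<or> g \<in> {e,e'}" using F(1) by blast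
    then show "(src g \<in> insert u J2) \<noteq> (tgt g \<in> insert u J2)"
      using edge1 edge2 that unfolding ge_def by blast
  qed (use deg in auto)
  have B: "go F (insert u J2)" if g2: "go F2 J2"
  proof -
    obtain e0 where e0: "e0 \<in> F2" "src e0 \<in> J2" "tgt e0 \<in> J2" "\<forall>g\<in>F2-{e0}. (src g \<in> J2) \<noteq> (tgt g \<in> J2)"
      using g2 unfolding go_def by blast
    have "\<forall>g\<in>F-{e0}. (src g \<in> insert u J2) \<noteq> (tgt g \<in> insert u J2)"
    proof
      fix g assume "g \<in> F - {e0}"
      then have "g \<in> F2 - {e0} \<or> g \<in> {e,e'}" using F(1) by blast
      then show "(src g \<in> insert u J2) \<noteq> (tgt g \<in> insert u J2)"
        using edge1 edge2 e0(4) by blast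
    qed
    moreover have "e0 \<in> F" using F(1) e0 by blast
    ultimately show ?thesis unfolding go_def using deg e0 by blast
  qed
  show ?thesis using A B by blast
qed

lemma go_intro:
  "e0 \<in> F \<Longrightarrow> src e0 \<in> J \<Longrightarrow> tgt e0 \<in> J \<Longrightarrow> \<forall>e\<in>F-{e0}. (src e \<in> J) \<noteq> (tgt e \<in> J)
   \<Longrightarrow> \<forall>x\<in>J. card (inc F x) = 2 \<Longrightarrow> go F J"
  unfolding go_def by blast

lemma one_end:
  "(src g = a \<and> tgt g = b) \<or> (src g = b \<and> tgt g = a) \<Longrightarrow> a \<in> J \<Longrightarrow> b \<notin> J \<Longrightarrow> (src g \<in> J) \<noteq> (tgt g \<in> J)"
  by auto

lemma main:
  assumes "wfg K F" "conn K F" "\<forall>x. card (inc F x) \<le> 2"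
  shows "(even (card F) \<longrightarrow> (\<exists>J\<subseteq>K. ge F J)) \<and> (odd (card F) \<and> 3 \<le> card F \<longrightarrow> (\<exists>J\<subseteq>K. go F J))"
  using assms
proof (induction "card F" arbitrary: K F rule: less_induct)
  case less
  note wf = less.prems(1) and c = less.prems(2) and db = less.prems(3)
  have finF: "finite F" and finK: "finite K" and wfe: "\<forall>e\<in>F. src e \<in> K \<and> tgt e \<in> K \<and> src e \<noteq> tgt e"
    using wf wfg_def by auto
  have finc: "finite (inc F x)" for x using finF inc_def by auto
  have incsub: "inc (F - X) x \<subseteq> inc F x" for X x unfolding inc_def by auto
  have incmono: "card (inc (F - X) x) \<le> card (inc F x)" for X x
    using incsub finc by (intro card_mono) auto
  show ?case
  proof (cases "F = {}")
    case True then show ?thesis unfolding ge_def by auto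
  next
    case Fne: False
    show ?thesis
    proof (cases "\<exists>v\<in>K. card (inc F v) = 1")
      case True
      then obtain v where vK: "v \<in> K" and "card (inc F v) = 1" by blast
      then obtain e where ve: "inc F v = {e}" by (meson card_1_singletonE)
      have eF: "e \<in> F" and ev: "src e = v \<or> tgt e = v" using ve unfolding inc_def by auto
      define u where "u = (if src e = v then tgt e else src e)"
      have uK: "u \<in> K" and uv: "u \<noteq> v" using wfe eF ev u_def by auto
      have eu: "e \<in> inc F u" using ev u_def eF unfolding inc_def by auto
      have eends: "(src e = u \<and> tgt e = v) \<or> (src e = v \<and> tgt e = u)" using ev u_def wfe eF by auto
      show ?thesis
      proof (cases "card F = 1")
        case True then show ?thesis by simp
      next
        case False
        have Kv: "K \<noteq> {v}" using uK uv by auto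
        have c1: "conn (K - {v}) (F - {e})" and w1: "wfg (K - {v}) (F - {e})"
          using leaf_conn[OF wf c vK ve Kv] by auto
        have F1ne: "F - {e} \<noteq> {}"
        proof
          assume "F - {e} = {}"
          then have "F = {e}" using eF by blast
          then show False using False by simp
        qed
        have uK1: "u \<in> K - {v}" using uK uv by auto
        have i1: "inc (F - {e}) u = inc F u - {e}" unfolding inc_def by auto
        have ne1: "inc (F - {e}) u \<noteq> {}" using nonisolated[OF w1 c1 F1ne uK1] .
        have cd1: "card (inc F u - {e}) = card (inc F u) - 1" using eu finc by (simp add: card_Diff_singleton)
        have "card (inc F u - {e}) \<noteq> 0" using ne1 i1 finc by simp
        moreover have "card (inc F u) \<le> 2" using db by blast
        ultimately have cu2: "card (inc F u) = 2" using cd1 by linarith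
        have ci1: "card (inc (F - {e}) u) = 1" using i1 cd1 cu2 by simp
        from ci1 obtain e' where ue': "inc (F - {e}) u = {e'}" by (meson card_1_singletonE)
        have e'F: "e' \<in> F" "e' \<noteq> e" and e'u: "src e' = u \<or> tgt e' = u" using ue' unfolding inc_def by auto
        define w where "w = (if src e' = u then tgt e' else src e')"
        have wK: "w \<in> K" and wu: "w \<noteq> u" using wfe e'F e'u w_def by auto
        have e'ends: "(src e' = u \<and> tgt e' = w) \<or> (src e' = w \<and> tgt e' = u)" using e'u w_def wfe e'F by auto
        have e'w: "e' \<in> inc F w" using e'ends e'F unfolding inc_def by auto
        have wv: "w \<noteq> v"
        proof
          assume "w = v"
          then have "e' \<in> inc F v" using e'w by simp
          with ve e'F show False by auto
        qed
        have Ku: "K - {v} \<noteq> {u}" using wK wu wv by auto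
        have c2: "conn (K - {v} - {u}) (F - {e} - {e'})" and w2: "wfg (K - {v} - {u}) (F - {e} - {e'})"
          using leaf_conn[OF w1 c1 uK1 ue' Ku] by auto
        define K2 where "K2 = K - {v} - {u}"
        define F2 where "F2 = F - {e} - {e'}"
        have F2alt: "F2 = F - {e, e'}" unfolding F2_def by auto
        have cardF2: "card F2 = card F - 2" unfolding F2_def using eF e'F finF
          by (simp add: card_Diff_singleton)
        have cardF: "card F \<ge> 2" using eF e'F finF
          proof -
          have "card {e, e'} \<le> card F" using eF e'F finF by (intro card_mono) auto
          then show ?thesis using e'F by simp
        qed
        have lt: "card F2 < card F" using cardF2 cardF by simp
        have db2: "\<forall>x. card (inc F2 x) \<le> 2" 
      proof
        fix x show "card (inc F2 x) \<le> 2" using incmono[of "{e,e'}" x] db[rule_format, of x] F2alt by simp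
      qed
        have w2': "wfg K2 F2" and c2': "conn K2 F2" using w2 c2 unfolding K2_def F2_def by auto
        have IH: "(even (card F2) \<longrightarrow> (\<exists>J\<subseteq>K2. ge F2 J)) \<and> (odd (card F2) \<and> 3 \<le> card F2 \<longrightarrow> (\<exists>J\<subseteq>K2. go F2 J))"
          by (rule less.hyps[OF lt w2' c2' db2])
        have wK2: "w \<in> K2" using wK wu wv K2_def by auto
        have dw: "card (inc F2 w) \<le> 1"
        proof -
          have "inc F2 w \<subseteq> inc F w - {e'}" unfolding F2_def inc_def by auto
          then have "card (inc F2 w) \<le> card (inc F w - {e'})" using finc by (intro card_mono) auto
          also have "\<dots> = card (inc F w) - 1" using e'w finc by (simp add: card_Diff_singleton)
          moreover have "card (inc F w) \<le> 2" using db by blast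
          ultimately show ?thesis by linarith
        qed
        have F2K2: "\<forall>g\<in>F2. src g \<in> K2 \<and> tgt g \<in> K2" using w2 unfolding wfg_def F2_def K2_def by blast
        have Fdec: "F = F2 \<union> {e, e'}" using eF e'F unfolding F2_def by blast
        have ext: "(ge F2 J2 \<longrightarrow> ge F (insert u J2)) \<and> (go F2 J2 \<longrightarrow> go F (insert u J2))"
          if J2K: "J2 \<subseteq> K2" and J2d: "\<forall>x\<in>J2. card (inc F2 x) = 2" for J2
        proof (rule extend[OF J2d Fdec finF db])
          show "\<forall>g\<in>F2. src g \<noteq> u \<and> tgt g \<noteq> u" using F2K2 K2_def by auto
          show "u \<notin> J2" using J2K K2_def by auto
          show "card (inc F u) = 2" by (rule cu2)
          have "w \<notin> J2" using J2d dw by fastforce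
          moreover have "v \<notin> J2" using J2K K2_def by auto
          ultimately show "\<forall>g\<in>{e,e'}. ((src g = u \<and> tgt g \<notin> J2 \<and> tgt g \<noteq> u) \<or> (tgt g = u \<and> src g \<notin> J2 \<and> src g \<noteq> u))"
            using eends e'ends uv wu by auto
        qed
        have K2K: "K2 \<subseteq> K" "u \<in> K" using K2_def uK by auto
        show ?thesis
        proof (intro conjI impI)
          assume "even (card F)"
          then have "even (card F2)" using cardF2 cardF by simp
          then obtain J2 where J2: "J2 \<subseteq> K2" "ge F2 J2" using IH by blast
          then have "ge F (insert u J2)" using ext[OF J2(1)] unfolding ge_def by blast
          then show "\<exists>J\<subseteq>K. ge F J" using J2(1) K2K by blast
        next
          assume oF: "odd (card F) \<and> 3 \<le> card F"
          then have oF2: "odd (card F2)" using cardF2 cardF by simp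
          show "\<exists>J\<subseteq>K. go F J"
          proof (cases "3 \<le> card F2")
            case True
            then obtain J2 where J2: "J2 \<subseteq> K2" "go F2 J2" using IH oF2 by blast
            then have "go F (insert u J2)" using ext[OF J2(1)] unfolding go_def by blast
            then show "\<exists>J\<subseteq>K. go F J" using J2(1) K2K by blast
          next
            case False
            then have "card F2 = 1" using oF2 by presburger
            then obtain f where F2f: "F2 = {f}" by (meson card_1_singletonE)
            have "inc F2 w \<noteq> {}" using nonisolated[OF w2 c2 _ ] wK2 F2f unfolding K2_def F2_def by auto
            then have fw: "f \<in> inc F2 w" using F2f unfolding inc_def by auto
            have fF: "f \<in> F" "f \<noteq> e'" "f \<noteq> e" using F2f unfolding F2_def by auto
            have "{e', f} \<subseteq> inc F w" using fw e'w fF unfolding inc_def by auto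
            then have "card {e', f} \<le> card (inc F w)" using finc by (intro card_mono) auto
            moreover have "card (inc F w) \<le> 2" using db by blast
            ultimately have cw2: "card (inc F w) = 2" using fF by simp
            obtain z where fends: "(src f = w \<and> tgt f = z) \<or> (src f = z \<and> tgt f = w)"
              using fw unfolding inc_def by auto
            have fK2: "src f \<in> K2" "tgt f \<in> K2" using F2K2 F2f by auto
            have "src f \<noteq> tgt f" using wfe fF(1) by blast
            then have zK2: "z \<in> K2" "z \<noteq> w" using fends fK2 by auto
            have zu: "z \<noteq> u" using zK2 K2_def by auto
            have gd: "\<forall>x\<in>{u, w}. card (inc F x) = 2" using cu2 cw2 by auto
            have ge0: "src e' \<in> {u, w}" "tgt e' \<in> {u, w}" using e'ends by auto
            have gr: "\<forall>g\<in>F - {e'}. (src g \<in> {u, w}) \<noteq> (tgt g \<in> {u, w})"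
            proof
              fix g assume "g \<in> F - {e'}"
              then have "g = e \<or> g = f" using Fdec F2f by auto
              then show "(src g \<in> {u, w}) \<noteq> (tgt g \<in> {u, w})"
              proof
                assume "g = e"
                moreover have "v \<notin> {u, w}" using uv wv by auto
                ultimately show ?thesis using one_end[OF eends, of "{u, w}"] by simp
              next
                assume "g = f"
                moreover have "z \<notin> {u, w}" using zu zK2(2) by auto
                ultimately show ?thesis using one_end[OF fends, of "{u, w}"] by simp
              qed
            qed
            have "go F {u, w}" by (rule go_intro[OF e'F(1) ge0 gr gd])
            moreover have "{u, w} \<subseteq> K" using uK wK by auto
            ultimately show ?thesis by (intro exI[of _ "{u, w}"] conjI)
          qed
        qed
      qed
    next
      case False
      have d2: "\<forall>x\<in>K. card (inc F x) = 2"
      proof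
        fix x assume xK: "x \<in> K"
        have "inc F x \<noteq> {}" using nonisolated[OF wf c Fne xK] .
        then have "card (inc F x) \<noteq> 0" using finc by simp
        moreover have "card (inc F x) \<noteq> 1" using False xK by blast
        moreover have "card (inc F x) \<le> 2" using db by blast
        ultimately show "card (inc F x) = 2" by linarith
      qed
      obtain e where eF: "e \<in> F" using Fne by blast
      define u where "u = src e"
      define v where "v = tgt e"
      have uK: "u \<in> K" and vK: "v \<in> K" and uv: "u \<noteq> v" using wfe eF u_def v_def by auto
      have eu: "e \<in> inc F u" and evv: "e \<in> inc F v" using eF u_def v_def unfolding inc_def by auto
      have c1: "conn K (F - {e})" using cycle_conn[OF wf c eF d2] .
      have w1: "wfg K (F - {e})" using wf unfolding wfg_def by auto
      have i1: "inc (F - {e}) u = inc F u - {e}" unfolding inc_def by auto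
      have "card (inc (F - {e}) u) = 1" using i1 d2 uK eu finc by (simp add: card_Diff_singleton)
      then obtain e' where ue': "inc (F - {e}) u = {e'}" by (meson card_1_singletonE)
      have e'F: "e' \<in> F" "e' \<noteq> e" and e'u: "src e' = u \<or> tgt e' = u" using ue' unfolding inc_def by auto
      define w where "w = (if src e' = u then tgt e' else src e')"
      have wK: "w \<in> K" and wu: "w \<noteq> u" using wfe e'F e'u w_def by auto
      have e'ends: "(src e' = u \<and> tgt e' = w) \<or> (src e' = w \<and> tgt e' = u)" using e'u w_def wfe e'F by auto
      have e'w: "e' \<in> inc F w" using e'ends e'F unfolding inc_def by auto
      have eends: "src e = u \<and> tgt e = v" using u_def v_def by auto
      have Ku: "K \<noteq> {u}" using vK uv by auto
      have c2: "conn (K - {u}) (F - {e} - {e'})" and w2: "wfg (K - {u}) (F - {e} - {e'})"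
        using leaf_conn[OF w1 c1 uK ue' Ku] by auto
      define K2 where "K2 = K - {u}"
      define F2 where "F2 = F - {e} - {e'}"
      have F2alt: "F2 = F - {e, e'}" unfolding F2_def by auto
      have cardF2: "card F2 = card F - 2" unfolding F2_def using eF e'F finF
        by (simp add: card_Diff_singleton)
      have cardF: "card F \<ge> 2" using eF e'F finF
        proof -
          have "card {e, e'} \<le> card F" using eF e'F finF by (intro card_mono) auto
          then show ?thesis using e'F by simp
        qed
      have lt: "card F2 < card F" using cardF2 cardF by simp
      have db2: "\<forall>x. card (inc F2 x) \<le> 2" 
      proof
        fix x show "card (inc F2 x) \<le> 2" using incmono[of "{e,e'}" x] db[rule_format, of x] F2alt by simp
      qed
      have w2': "wfg K2 F2" and c2': "conn K2 F2" using w2 c2 unfolding K2_def F2_def by auto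
      have IH: "(even (card F2) \<longrightarrow> (\<exists>J\<subseteq>K2. ge F2 J)) \<and> (odd (card F2) \<and> 3 \<le> card F2 \<longrightarrow> (\<exists>J\<subseteq>K2. go F2 J))"
        by (rule less.hyps[OF lt w2' c2' db2])
      have wK2: "w \<in> K2" and vK2: "v \<in> K2" using wK wu vK uv K2_def by auto
      have dle: "card (inc F2 x) \<le> 1" if "g \<in> inc F x" "g \<in> {e, e'}" for x g
      proof -
        have "inc F2 x \<subseteq> inc F x - {g}" using that unfolding F2_def inc_def by auto
        then have "card (inc F2 x) \<le> card (inc F x - {g})" using finc by (intro card_mono) auto
        also have "\<dots> = card (inc F x) - 1" using that finc by (simp add: card_Diff_singleton)
        moreover have "card (inc F x) \<le> 2" using db by blast
        ultimately show ?thesis by linarith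
      qed
      have dw: "card (inc F2 w) \<le> 1" using dle[OF e'w] by simp
      have dv: "card (inc F2 v) \<le> 1" using dle[OF evv] by simp
      have F2K2: "\<forall>g\<in>F2. src g \<in> K2 \<and> tgt g \<in> K2" using w2 unfolding wfg_def F2_def K2_def by blast
      have Fdec: "F = F2 \<union> {e, e'}" using eF e'F unfolding F2_def by blast
      have ext: "(ge F2 J2 \<longrightarrow> ge F (insert u J2)) \<and> (go F2 J2 \<longrightarrow> go F (insert u J2))"
        if J2K: "J2 \<subseteq> K2" and J2d: "\<forall>x\<in>J2. card (inc F2 x) = 2" for J2
      proof (rule extend[OF J2d Fdec finF db])
        show "\<forall>g\<in>F2. src g \<noteq> u \<and> tgt g \<noteq> u" using F2K2 K2_def by auto
        show "u \<notin> J2" using J2K K2_def by auto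
        show "card (inc F u) = 2" using d2 uK by blast
        have "w \<notin> J2" using J2d dw by fastforce
        moreover have "v \<notin> J2" using J2d dv by fastforce
        ultimately show "\<forall>g\<in>{e,e'}. ((src g = u \<and> tgt g \<notin> J2 \<and> tgt g \<noteq> u) \<or> (tgt g = u \<and> src g \<notin> J2 \<and> src g \<noteq> u))"
          using eends e'ends uv wu by auto
      qed
      have K2K: "K2 \<subseteq> K" using K2_def by auto
      show ?thesis
      proof (intro conjI impI)
        assume "even (card F)"
        then have "even (card F2)" using cardF2 cardF by simp
        then obtain J2 where J2: "J2 \<subseteq> K2" "ge F2 J2" using IH by blast
        then have "ge F (insert u J2)" using ext[OF J2(1)] unfolding ge_def by blast
        then show "\<exists>J\<subseteq>K. ge F J" using J2(1) K2K uK by blast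
      next
        assume oF: "odd (card F) \<and> 3 \<le> card F"
        then have oF2: "odd (card F2)" using cardF2 cardF by simp
        show "\<exists>J\<subseteq>K. go F J"
        proof (cases "3 \<le> card F2")
          case True
          then obtain J2 where J2: "J2 \<subseteq> K2" "go F2 J2" using IH oF2 by blast
          then have "go F (insert u J2)" using ext[OF J2(1)] unfolding go_def by blast
          then show "\<exists>J\<subseteq>K. go F J" using J2(1) K2K uK by blast
        next
          case False
          then have "card F2 = 1" using oF2 by presburger
          then obtain f where F2f: "F2 = {f}" by (meson card_1_singletonE)
          have "inc F2 v \<noteq> {}" using nonisolated[OF w2 c2 _ ] vK2 F2f unfolding K2_def F2_def by auto
          then have fv: "f \<in> inc F2 v" using F2f unfolding inc_def by auto
          have fF: "f \<in> F" "f \<noteq> e'" "f \<noteq> e" using F2f unfolding F2_def by auto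
          have vw: "v \<noteq> w"
          proof
            assume "v = w"
            then have "{e, e', f} \<subseteq> inc F v" using fv e'w evv fF unfolding inc_def by auto
            then have "card {e, e', f} \<le> card (inc F v)" using finc by (intro card_mono) auto
            then show False using d2 vK fF e'F by auto
          qed
          obtain z where fends: "(src f = v \<and> tgt f = z) \<or> (src f = z \<and> tgt f = v)"
            using fv unfolding inc_def by auto
          have fK2: "src f \<in> K2" "tgt f \<in> K2" using F2K2 F2f by auto
          have "src f \<noteq> tgt f" using wfe fF(1) by blast
          then have zK2: "z \<in> K2" "z \<noteq> v" using fends fK2 by auto
          have zu: "z \<noteq> u" using zK2 K2_def by auto
          have gd: "\<forall>x\<in>{u, v}. card (inc F x) = 2" using d2 uK vK by auto
          have ge0: "src e \<in> {u, v}" "tgt e \<in> {u, v}" using eends by auto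
          have gr: "\<forall>g\<in>F - {e}. (src g \<in> {u, v}) \<noteq> (tgt g \<in> {u, v})"
          proof
            fix g assume "g \<in> F - {e}"
            then have "g = e' \<or> g = f" using Fdec F2f by auto
            then show "(src g \<in> {u, v}) \<noteq> (tgt g \<in> {u, v})"
            proof
              assume "g = e'"
              moreover have "w \<notin> {u, v}" using wu vw by auto
              ultimately show ?thesis using one_end[OF e'ends, of "{u, v}"] by simp
            next
              assume "g = f"
              moreover have "z \<notin> {u, v}" using zu zK2(2) by auto
              ultimately show ?thesis using one_end[OF fends, of "{u, v}"] by simp
            qed
          qed
          have "go F {u, v}" by (rule go_intro[OF eF ge0 gr gd])
          moreover have "{u, v} \<subseteq> K" using uK vK by auto
          ultimately show ?thesis by (intro exI[of _ "{u, v}"] conjI)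
        qed
      qed
    qed
  qed
qed

lemma two_leaves:
  assumes fT: "f \<in> T" and a: "inc T (src f) = {f}" and b: "inc T (tgt f) = {f}"
    and r: "(src f, x) \<in> (RR T)\<^sup>*"
  shows "x \<in> {src f, tgt f}"
  using r
proof (induction rule: rtrancl_induct)
  case base then show ?case by simp
next
  case (step y x)
  obtain g where g: "g \<in> T" "(src g = y \<and> tgt g = x) \<or> (tgt g = y \<and> src g = x)"
    using step.hyps(2) R_iff by blast
  have "g \<in> inc T y" using g unfolding inc_def by auto
  then have "g = f" using step.IH a b by auto
  then show ?case using g by auto
qed

definition vcomp :: "'v set \<Rightarrow> 'e set \<Rightarrow> 'v \<Rightarrow> 'v set" where
  "vcomp V C a = {x\<in>V. (a, x) \<in> (RR C)\<^sup>*}"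

lemma components_comp: "components V C src tgt = {vcomp V C a | a. a \<in> V}"
  unfolding components_def vcomp_def reach_R by simp

lemma comp_same:
  assumes "x \<in> vcomp V C a" shows "vcomp V C x = vcomp V C a"
proof -
  have ax: "(a, x) \<in> (RR C)\<^sup>*" and xa: "(x, a) \<in> (RR C)\<^sup>*" using assms rsym unfolding vcomp_def by auto
  show ?thesis unfolding vcomp_def using ax xa by (auto intro: rtrancl_trans)
qed

lemma comp_closed:
  assumes "\<forall>e\<in>C. src e \<in> V \<and> tgt e \<in> V" "e \<in> C"
  shows "src e \<in> vcomp V C a \<longleftrightarrow> tgt e \<in> vcomp V C a"
proof -
  have "(src e, tgt e) \<in> RR C" "(tgt e, src e) \<in> RR C" using assms(2) unfolding RR_def by blast+
  then show ?thesis using assms unfolding vcomp_def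
    using rtrancl.rtrancl_into_rtrancl[of a "src e" "RR C" "tgt e"]
      rtrancl.rtrancl_into_rtrancl[of a "tgt e" "RR C" "src e"] by blast
qed

lemma comp_conn:
  assumes ends: "\<forall>e\<in>C. src e \<in> V \<and> tgt e \<in> V" and aV: "a \<in> V"
  shows "conn (vcomp V C a) (induced_edges C src tgt (vcomp V C a))"
proof -
  define K where "K = vcomp V C a"
  have r: "(a, x) \<in> (RR (induced_edges C src tgt K))\<^sup>*" if "(a, x) \<in> (RR C)\<^sup>*" for x
    using that
  proof (induction rule: rtrancl_induct)
    case base then show ?case by simp
  next
    case (step y x)
    obtain g where g: "g \<in> C" "(src g = y \<and> tgt g = x) \<or> (tgt g = y \<and> src g = x)"
      using step.hyps(2) R_iff by blast
    have "y \<in> V" "x \<in> V" using g ends by auto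
    then have "y \<in> K" "x \<in> K" using step.hyps rtrancl.rtrancl_into_rtrancl[OF step.hyps]
      unfolding K_def vcomp_def by auto
    then have "g \<in> induced_edges C src tgt K" using g unfolding induced_edges_def by auto
    then have "(y, x) \<in> RR (induced_edges C src tgt K)" using g unfolding R_iff by blast
    then show ?case by (rule rtrancl.rtrancl_into_rtrancl[OF step.IH])
  qed
  have "a \<in> K" using aV unfolding K_def vcomp_def by auto
  moreover have "(u, v) \<in> (RR (induced_edges C src tgt K))\<^sup>*" if "u \<in> K" "v \<in> K" for u v
  proof -
    have "(a, u) \<in> (RR (induced_edges C src tgt K))\<^sup>*" "(a, v) \<in> (RR (induced_edges C src tgt K))\<^sup>*"
      using that r unfolding K_def vcomp_def by auto
    then show ?thesis using rsym rtrancl_trans by metis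
  qed
  ultimately show ?thesis unfolding conn_def K_def by blast
qed

lemma final:
  assumes mg: "multigraph V E src tgt"
    and cE: "connected_graph V E src tgt"
    and cub: "cubic V E src tgt"
    and m4: "card V mod 4 = 0"
    and hx: "\<exists>T. xuong_tree V E src tgt T \<and>
           (\<exists>K. odd_cotree_components V E src tgt T = {K} \<and>
                card (induced_edges (E - T) src tgt K) \<ge> 3)"
  shows "\<exists>A J. coherent_stable_decycling_partition V E src tgt A J"
proof -
  obtain T K0 where TE: "T \<subseteq> E" and cT: "conn V T" and acT: "acyclic_graph T src tgt"
    and oK: "odd_cotree_components V E src tgt T = {K0}"
    and K3: "card (induced_edges (E - T) src tgt K0) \<ge> 3"
    using hx unfolding xuong_tree_def spanning_tree_def is_tree_def conn_iff by blast
  define C where "C = E - T"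
  have finV: "finite V" and finE: "finite E" and ends: "\<forall>e\<in>E. src e \<in> V \<and> tgt e \<in> V"
    using mg unfolding multigraph_def by auto
  have finT: "finite T" and finC: "finite C" using finE TE C_def finite_subset by auto
  have endsC: "\<forall>e\<in>C. src e \<in> V \<and> tgt e \<in> V" using ends C_def by auto
  have endsT: "\<forall>e\<in>T. src e \<in> V \<and> tgt e \<in> V" using ends TE by auto
  have Vne: "V \<noteq> {}" using cE unfolding connected_graph_def by auto
  then have cV0: "card V \<noteq> 0" using finV by simp
  have cV: "card V \<ge> 4" using m4 cV0 by presburger
  have other: "\<exists>y\<in>V. y \<noteq> v" for v
  proof (rule ccontr)
    assume "\<not> ?thesis"
    then have "V \<subseteq> {v}" by auto
    then have "card V \<le> 1" using card_mono[of "{v}" V] by simp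
    then show False using cV by simp
  qed
  have loopT: "\<forall>e\<in>T. src e \<noteq> tgt e"
  proof
    fix e assume "e \<in> T"
    then have "(src e, tgt e) \<notin> reach (T - {e}) src tgt" using acT unfolding acyclic_graph_def by blast
    then show "src e \<noteq> tgt e" unfolding reach_def by auto
  qed
  have Tat: "inc T v \<noteq> {}" if "v \<in> V" for v
  proof -
    obtain y where y: "y \<in> V" "y \<noteq> v" using other by blast
    then have "(v, y) \<in> (RR T)\<^sup>*" using cT that unfolding conn_def by blast
    then obtain z where "(v, z) \<in> RR T" using y(2) by (metis converse_rtranclE)
    then show ?thesis unfolding R_iff inc_def by auto
  qed
  have incE: "inc E v = inc T v \<union> inc C v" "inc T v \<inter> inc C v = {}" for v
    using TE unfolding inc_def C_def by auto
  have fininc: "finite (inc F v)" if "F \<subseteq> E" for F v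
    using finE that unfolding inc_def by (auto intro: finite_subset)
  have loopC: "\<forall>e\<in>C. src e \<noteq> tgt e"
  proof (rule ccontr)
    assume "\<not> ?thesis"
    then obtain g where gC: "g \<in> C" and gl: "src g = tgt g" by blast
    define v where "v = src g"
    have vV: "v \<in> V" using endsC gC v_def by auto
    obtain h where hT: "h \<in> inc T v" using Tat[OF vV] by blast
    have incCv: "inc C v = {g}"
    proof (rule ccontr)
      assume "inc C v \<noteq> {g}"
      moreover have "g \<in> inc C v" using gC gl v_def unfolding inc_def by auto
      ultimately obtain g' where g': "g' \<in> inc C v" "g' \<noteq> g" by blast
      have hne: "h \<noteq> g" "h \<noteq> g'" using hT gC g'(1) unfolding inc_def C_def by auto
      have "{g, h, g'} \<subseteq> inc E v" using hT g' gC gl v_def incE(1) unfolding inc_def by auto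
      then have c3: "card {g, h, g'} \<le> card (inc E v)" using fininc[of E] by (intro card_mono) auto
      have "card {g, h, g'} = 3" using hne g'(2) by auto
      then have c3': "card (inc E v) \<ge> 3" using c3 by simp
      have g2: "g \<in> {e\<in>E. src e = v} \<inter> {e\<in>E. tgt e = v}" using gC gl v_def C_def by auto
      have fin2: "finite ({e\<in>E. src e = v} \<inter> {e\<in>E. tgt e = v})" using finE by auto
      have "card ({e\<in>E. src e = v} \<inter> {e\<in>E. tgt e = v}) \<ge> 1"
        using g2 fin2 by (metis One_nat_def Suc_leI card_gt_0_iff empty_iff)
      moreover have "card {e\<in>E. src e = v} + card {e\<in>E. tgt e = v} =
          card ({e\<in>E. src e = v} \<union> {e\<in>E. tgt e = v}) + card ({e\<in>E. src e = v} \<inter> {e\<in>E. tgt e = v})"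
        using finE by (intro card_Un_Int) auto
      moreover have "{e\<in>E. src e = v} \<union> {e\<in>E. tgt e = v} = inc E v" unfolding inc_def by auto
      moreover have "degree E src tgt v = 3" using cub vV unfolding cubic_def by auto
      ultimately have "3 \<ge> card (inc E v) + 1" unfolding degree_def by simp
      then show False using c3' by linarith
    qed
    have cv: "vcomp V C v = {v}"
    proof -
      have "x = v" if "(v, x) \<in> (RR C)\<^sup>*" for x
        using that
      proof (induction rule: rtrancl_induct)
        case base then show ?case by simp
      next
        case (step y x)
        obtain g' where g': "g' \<in> C" "(src g' = y \<and> tgt g' = x) \<or> (tgt g' = y \<and> src g' = x)"
          using step.hyps(2) R_iff by blast
        then have "g' \<in> inc C v" using step.IH unfolding inc_def by auto
        then have "g' = g" using incCv by auto
        then show ?case using g' gl v_def by auto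
      qed
      then show ?thesis using vV unfolding vcomp_def by auto
    qed
    have "vcomp V C v \<in> components V (E - T) src tgt" using vV C_def components_comp by auto
    moreover have "induced_edges C src tgt {v} = {g}"
      using incCv gC gl v_def unfolding induced_edges_def inc_def by auto
    ultimately have "{v} \<in> odd_cotree_components V E src tgt T"
      unfolding odd_cotree_components_def using cv C_def by auto
    then have "K0 = {v}" using oK by auto
    then show False using K3 \<open>induced_edges C src tgt {v} = {g}\<close> C_def by auto
  qed
  have loopE: "\<forall>e\<in>E. src e \<noteq> tgt e" using loopT loopC C_def by auto
  have deg3: "card (inc E v) = 3" if "v \<in> V" for v
    using deg_inc[OF finE loopE, of v] cub that unfolding cubic_def by auto
  have degsplit: "card (inc E v) = card (inc T v) + card (inc C v)" for v
    using incE[of v] fininc[of T v] fininc[of C v] TE C_def by (simp add: card_Un_disjoint)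
  have dbC: "\<forall>x. card (inc C x) \<le> 2"
  proof
    fix x show "card (inc C x) \<le> 2"
    proof (cases "x \<in> V")
      case True
      have "card (inc T x) \<ge> 1" using Tat[OF True] fininc[of T x] TE
        by (metis One_nat_def Suc_leI card_gt_0_iff)
      then show ?thesis using deg3[OF True] degsplit[of x] by linarith
    next
      case False
      then have "inc C x = {}" using endsC unfolding inc_def by auto
      then show ?thesis by simp
    qed
  qed
  have wfK: "wfg K (induced_edges C src tgt K)" if "K \<in> components V C src tgt" for K
    using finV finC endsC loopC that unfolding wfg_def induced_edges_def components_def
    by (auto intro: finite_subset)
  have connK: "conn K (induced_edges C src tgt K)" if "K \<in> components V C src tgt" for K
    using that comp_conn[OF endsC] unfolding components_comp by auto
  have incK: "inc (induced_edges C src tgt K) x = inc C x" if KC: "K \<in> components V C src tgt" and xK: "x \<in> K" for K x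
  proof -
    obtain a where a: "K = vcomp V C a" using KC unfolding components_comp by auto
    show ?thesis using xK comp_closed[OF endsC] unfolding a inc_def induced_edges_def by auto
  qed
  have dbK: "\<forall>x. card (inc (induced_edges C src tgt K) x) \<le> 2" for K
  proof
    fix x
    have "inc (induced_edges C src tgt K) x \<subseteq> inc C x" unfolding inc_def induced_edges_def by auto
    then have "card (inc (induced_edges C src tgt K) x) \<le> card (inc C x)"
      using fininc[of C x] C_def by (intro card_mono) auto
    then show "card (inc (induced_edges C src tgt K) x) \<le> 2" using dbC by (metis order_trans)
  qed
  have K0c: "K0 \<in> components V C src tgt" and K0o: "odd (card (induced_edges C src tgt K0))"
    using oK C_def unfolding odd_cotree_components_def by auto
  have Kev: "even (card (induced_edges C src tgt K))" if "K \<in> components V C src tgt" "K \<noteq> K0" for K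
    using that oK C_def unfolding odd_cotree_components_def by auto
  define P where "P K J \<longleftrightarrow> J \<subseteq> K \<and> (if K = K0 then go (induced_edges C src tgt K) J else ge (induced_edges C src tgt K) J)" for K J
  define JK where "JK K = (SOME J. P K J)" for K
  have PJK: "P K (JK K)" if "K \<in> components V C src tgt" for K
  proof -
    have m: "(even (card (induced_edges C src tgt K)) \<longrightarrow> (\<exists>J\<subseteq>K. ge (induced_edges C src tgt K) J)) \<and>
      (odd (card (induced_edges C src tgt K)) \<and> 3 \<le> card (induced_edges C src tgt K) \<longrightarrow> (\<exists>J\<subseteq>K. go (induced_edges C src tgt K) J))"
      by (rule main[OF wfK[OF that] connK[OF that] dbK])
    have "\<exists>J. P K J"
    proof (cases "K = K0")
      case True
      then show ?thesis using m K0o K3 C_def unfolding P_def by auto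
    next
      case False
      then show ?thesis using m Kev[OF that False] unfolding P_def by auto
    qed
    then show ?thesis unfolding JK_def by (rule someI_ex)
  qed
  define J where "J = (\<Union>K\<in>components V C src tgt. JK K)"
  have compV: "K \<subseteq> V" if "K \<in> components V C src tgt" for K
    using that unfolding components_def by auto
  have JV: "J \<subseteq> V" using PJK compV unfolding J_def P_def by blast
  have memJ: "x \<in> J \<longleftrightarrow> x \<in> JK K" if KC: "K \<in> components V C src tgt" and xK: "x \<in> K" for K x
  proof
    assume "x \<in> J"
    then obtain K' where K': "K' \<in> components V C src tgt" "x \<in> JK K'" unfolding J_def by blast
    then have "x \<in> K'" using PJK unfolding P_def by blast
    obtain a where a: "K = vcomp V C a" using KC unfolding components_comp by auto
    obtain a' where a': "K' = vcomp V C a'" using K'(1) unfolding components_comp by auto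
    have "K = K'" using comp_same[of x V C a] comp_same[of x V C a'] \<open>x \<in> K'\<close> xK a a' by simp
    then show "x \<in> JK K" using K' by simp
  next
    assume "x \<in> JK K" then show "x \<in> J" using KC unfolding J_def by blast
  qed
  have compe: "\<exists>K\<in>components V C src tgt. e \<in> induced_edges C src tgt K \<and> src e \<in> K \<and> tgt e \<in> K" if "e \<in> C" for e
  proof -
    have sV: "src e \<in> V" using endsC that by auto
    have "src e \<in> vcomp V C (src e)" using sV unfolding vcomp_def by auto
    moreover then have "tgt e \<in> vcomp V C (src e)" using comp_closed[OF endsC that] by blast
    moreover have "vcomp V C (src e) \<in> components V C src tgt" using sV unfolding components_comp by auto
    ultimately show ?thesis using that unfolding induced_edges_def by auto
  qed
  have degJ: "card (inc C x) = 2" if xJ: "x \<in> J" for x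
  proof -
    obtain K where K: "K \<in> components V C src tgt" "x \<in> JK K" using xJ unfolding J_def by blast
    have xK: "x \<in> K" using PJK[OF K(1)] K(2) unfolding P_def by blast
    have "card (inc (induced_edges C src tgt K) x) = 2"
      using PJK[OF K(1)] K(2) unfolding P_def ge_def go_def by (auto split: if_splits)
    then show ?thesis using incK[OF K(1) xK] by simp
  qed
  obtain e0 where e0: "e0 \<in> induced_edges C src tgt K0" "src e0 \<in> JK K0" "tgt e0 \<in> JK K0"
    "\<forall>e\<in>induced_edges C src tgt K0 - {e0}. (src e \<in> JK K0) \<noteq> (tgt e \<in> JK K0)"
    using PJK[OF K0c] unfolding P_def go_def by auto
  have e0C: "e0 \<in> C" and e0K: "src e0 \<in> K0" "tgt e0 \<in> K0" using e0(1) unfolding induced_edges_def by auto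
  have e0J: "src e0 \<in> J" "tgt e0 \<in> J" using e0 memJ[OF K0c] e0K by auto
  have oneC: "(src e \<in> J) \<noteq> (tgt e \<in> J)" if eC: "e \<in> C" and ne0: "e \<noteq> e0" for e
  proof -
    obtain K where K: "K \<in> components V C src tgt" "e \<in> induced_edges C src tgt K" "src e \<in> K" "tgt e \<in> K"
      using compe[OF eC] by blast
    have "(src e \<in> JK K) \<noteq> (tgt e \<in> JK K)"
    proof (cases "K = K0")
      case True
      then show ?thesis using e0(4) K(2) ne0 by auto
    next
      case False
      then show ?thesis using PJK[OF K(1)] K(2) unfolding P_def ge_def by auto
    qed
    then show ?thesis using memJ[OF K(1) K(3)] memJ[OF K(1) K(4)] by simp
  qed
  have leafJ: "\<exists>g. inc T x = {g}" if "x \<in> J" for x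
  proof -
    have "card (inc T x) = 1" using deg3[of x] degsplit[of x] degJ[OF that] JV that by auto
    then show ?thesis by (meson card_1_singletonE)
  qed
  have noTJ: "\<not> (src f \<in> J \<and> tgt f \<in> J)" if fT: "f \<in> T" for f
  proof
    assume fJ: "src f \<in> J \<and> tgt f \<in> J"
    have a: "inc T (src f) = {f}"
    proof -
      obtain g where g: "inc T (src f) = {g}" using leafJ fJ by blast
      moreover have "f \<in> inc T (src f)" using fT unfolding inc_def by auto
      ultimately show ?thesis by auto
    qed
    have b: "inc T (tgt f) = {f}"
    proof -
      obtain g where g: "inc T (tgt f) = {g}" using leafJ fJ by blast
      moreover have "f \<in> inc T (tgt f)" using fT unfolding inc_def by auto
      ultimately show ?thesis by auto
    qed
    have "V \<subseteq> {src f, tgt f}"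
    proof
      fix x assume "x \<in> V"
      moreover have "src f \<in> V" using endsT fT by auto
      ultimately have "(src f, x) \<in> (RR T)\<^sup>*" using cT unfolding conn_def by blast
      then show "x \<in> {src f, tgt f}" by (rule two_leaves[OF fT a b])
    qed
    then have "card V \<le> card {src f, tgt f}" by (intro card_mono) auto
    also have "\<dots> \<le> 2" by (simp add: card_insert_if)
    finally show False using cV by simp
  qed
  define A where "A = V - J"
  have Tne: "T \<noteq> {}"
  proof -
    obtain v where "v \<in> V" using Vne by blast
    then show ?thesis using Tat[of v] unfolding inc_def by auto
  qed
  have Ane: "A \<noteq> {}"
  proof -
    obtain f where fT: "f \<in> T" using Tne by blast
    then show ?thesis using noTJ[OF fT] endsT unfolding A_def by auto
  qed
  have Jne: "J \<noteq> {}" using e0J by auto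
  have indA: "induced_edges E src tgt A = induced_edges T src tgt A"
  proof -
    have "e \<in> T" if "e \<in> E" "src e \<in> A" "tgt e \<in> A" for e
    proof (rule ccontr)
      assume "e \<notin> T"
      then have eC: "e \<in> C" using that C_def by auto
      show False
      proof (cases "e = e0")
        case True then show False using e0J that unfolding A_def by auto
      next
        case False then show False using oneC[OF eC False] that unfolding A_def by auto
      qed
    qed
    then show ?thesis using TE unfolding induced_edges_def by auto
  qed
  have indJ: "induced_edges E src tgt J = {e0}"
  proof -
    have X: "e = e0" if "e \<in> E" "src e \<in> J" "tgt e \<in> J" for e
    proof (cases "e \<in> T")
      case True then show ?thesis using noTJ[OF True] that(2,3) by simp
    next
      case False
      then have eC: "e \<in> C" using that C_def by auto
      show ?thesis
      proof (rule ccontr)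
        assume "e \<noteq> e0"
        then have "(src e \<in> J) \<noteq> (tgt e \<in> J)" by (rule oneC[OF eC])
        then show False using that(2,3) by simp
      qed
    qed
    have "e0 \<in> E" using e0C C_def by auto
    then have "e0 \<in> induced_edges E src tgt J" using e0J unfolding induced_edges_def by blast
    moreover have "induced_edges E src tgt J \<subseteq> {e0}"
    proof
      fix e assume "e \<in> induced_edges E src tgt J"
      then have "e \<in> E" "src e \<in> J" "tgt e \<in> J" unfolding induced_edges_def by auto
      then show "e \<in> {e0}" using X by blast
    qed
    ultimately show ?thesis by blast
  qed
  have connA: "conn A (induced_edges T src tgt A)"
    unfolding conn_def
  proof (intro conjI ballI)
    show "A \<noteq> {}" by (rule Ane)
  next
    fix u x assume ux: "u \<in> A" "x \<in> A"
    then have "(u, x) \<in> (RR T)\<^sup>*" using cT unfolding conn_def A_def by blast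
    have w1: "\<forall>e\<in>T. src e \<in> V \<and> tgt e \<in> V \<and> src e \<noteq> tgt e" using endsT loopT by blast
    have w2: "\<forall>x\<in>J. \<exists>g. inc T x = {g}" using leafJ by blast
    have w3: "u \<notin> J" using ux unfolding A_def by blast
    have "x \<notin> J" using ux unfolding A_def by blast
    then show "(u, x) \<in> (RR (induced_edges T src tgt A))\<^sup>*"
      using leaves_reach[OF w1 w2 w3 \<open>(u, x) \<in> (RR T)\<^sup>*\<close>] unfolding A_def by blast
  qed
  have acA: "acyclic_graph (induced_edges T src tgt A) src tgt"
    unfolding acyclic_graph_def
  proof
    fix e assume e: "e \<in> induced_edges T src tgt A"
    then have "e \<in> T" unfolding induced_edges_def by auto
    then have "(src e, tgt e) \<notin> reach (T - {e}) src tgt" using acT unfolding acyclic_graph_def by blast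
    moreover have "reach (induced_edges T src tgt A - {e}) src tgt \<subseteq> reach (T - {e}) src tgt"
      unfolding reach_R by (rule R_mono) (auto simp: induced_edges_def)
    ultimately show "(src e, tgt e) \<notin> reach (induced_edges T src tgt A - {e}) src tgt" by blast
  qed
  have "coherent_stable_decycling_partition V E src tgt A J"
    unfolding coherent_stable_decycling_partition_def
  proof (intro conjI)
    show "A \<union> J = V" using JV unfolding A_def by auto
    show "A \<inter> J = {}" unfolding A_def by auto
    show "A \<noteq> {}" by (rule Ane)
    show "J \<noteq> {}" by (rule Jne)
    show "is_tree A (induced_edges E src tgt A) src tgt"
      unfolding is_tree_def indA conn_iff using connA acA by blast
    show "independent_set E src tgt J \<or> near_independent_set E src tgt J"
      unfolding near_independent_set_def indJ by simp
  qed
  then show ?thesis by blast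
qed

end

theorem corollary3:
  fixes V :: "'v set" and E :: "'e set" and src tgt :: "'e \<Rightarrow> 'v"
  assumes "multigraph V E src tgt"
    and "connected_graph V E src tgt"
    and "cubic V E src tgt"
    and "card V mod 4 = 0"
    and "\<exists>T. xuong_tree V E src tgt T \<and>
           (\<exists>K. odd_cotree_components V E src tgt T = {K} \<and>
                card (induced_edges (E - T) src tgt K) \<ge> 3)"
  shows "\<exists>A J. coherent_stable_decycling_partition V E src tgt A J"
  by (rule final[OF assms])

end
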